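(* Let $X$ be a quasi-Polish space and $E$ an equivalence relation on $X$ such that the $E$-saturation of every open set is open. Then one may adjoin countably many $E$-invariant closed sets to the topology of $X$ so that, for the resulting topology, $X/\!/E$ has the same elements (the same $\approx_E$-classes) as before but is Polish.
   Context: For a topology on $X$, $x\approx_E y$ iff $\overline{[x]_E}=\overline{[y]_E}$, and $X/\!/E:=X/{\approx_E}$ with the quotient topology. A quasi-Polish space is a space homeomorphic to a $\mathbf\Pi^0_2$ subset of $\mathbb S^{\mathbb N}$, where $\mathbb S$ is the Sierpiński space and $\mathbf\Pi^0_2$ means a countable intersection of sets $U\cup F$ with $U$ open and $F$ closed. *)

theory Defs
  imports "HOL-Analysis.Analysis"
begin

definition sierpinski_space :: "bool topology" where
  "sierpinski_space = topology (\<lambda>U. U \<in> {{}, {True}, UNIV})"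

definition sierpinski_power :: "(nat \<Rightarrow> bool) topology" where
  "sierpinski_power = product_topology (\<lambda>_. sierpinski_space) UNIV"

definition Pi02_in :: "'a topology \<Rightarrow> 'a set \<Rightarrow> bool" where
  "Pi02_in Y A \<longleftrightarrow> (\<exists>U F :: nat \<Rightarrow> 'a set.
      (\<forall>n. openin Y (U n) \<and> closedin Y (F n)) \<and> A = topspace Y \<inter> (\<Inter>n. U n \<union> F n))"

definition quasi_Polish_space :: "'a topology \<Rightarrow> bool" where
  "quasi_Polish_space X \<longleftrightarrow> (\<exists>A. Pi02_in sierpinski_power A \<and>
      X homeomorphic_space subtopology sierpinski_power A)"

definition Polish_space :: "'a topology \<Rightarrow> bool" where
  "Polish_space X \<longleftrightarrow> completely_metrizable_space X \<and> separable_space X"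

definition closure_equiv :: "'a topology \<Rightarrow> 'a rel \<Rightarrow> 'a rel" where
  "closure_equiv X E = {(x, y). x \<in> topspace X \<and> y \<in> topspace X \<and>
      X closure_of (E `` {x}) = X closure_of (E `` {y})}"

definition quotient_topology :: "'a topology \<Rightarrow> 'a rel \<Rightarrow> 'a set topology" where
  "quotient_topology X R = topology (\<lambda>U. U \<subseteq> topspace X // R \<and>
      openin X {x \<in> topspace X. R `` {x} \<in> U})"

definition closure_quotient :: "'a topology \<Rightarrow> 'a rel \<Rightarrow> 'a set topology" where
  "closure_quotient X E = quotient_topology X (closure_equiv X E)"

end

theory Submission
  imports Defs "HOL-Library.Nat_Bijection"
begin


lemma istop_sier: "istopology (\<lambda>U::bool set. U \<in> {{}, {True}, UNIV})"
  unfolding istopology_def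
proof (intro conjI allI impI)
  fix S T :: "bool set" assume "S \<in> {{}, {True}, UNIV}" "T \<in> {{}, {True}, UNIV}"
  then show "S \<inter> T \<in> {{}, {True}, UNIV}" by auto
next
  fix K :: "bool set set" assume K: "\<forall>S\<in>K. S \<in> {{}, {True}, UNIV}"
  show "\<Union>K \<in> {{}, {True}, UNIV}"
  proof (cases "UNIV \<in> K")
    case True then show ?thesis by auto
  next
    case F: False
    show ?thesis
    proof (cases "{True} \<in> K")
      case True
      have "\<Union>K = {True}" using K F True by auto
      then show ?thesis by simp
    next
      case False
      have "\<Union>K = {}" using K F False by auto
      then show ?thesis by simp
    qed
  qed
qed

lemma openin_sier: "openin sierpinski_space U \<longleftrightarrow> U = {} \<or> U = {True} \<or> U = UNIV"
  unfolding sierpinski_space_def using topology_inverse'[OF istop_sier] by auto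

lemma topspace_sier[simp]: "topspace sierpinski_space = UNIV"
  unfolding topspace_def using openin_sier by auto

lemma topspace_SP[simp]: "topspace sierpinski_power = UNIV"
  unfolding sierpinski_power_def by (simp add: topspace_product_topology)

definition sbox :: "nat set \<Rightarrow> (nat \<Rightarrow> bool) set" where
  "sbox t = {b. \<forall>i\<in>t. b i}"

lemma sbox_open: assumes "finite t" shows "openin sierpinski_power (sbox t)"
  unfolding sierpinski_power_def openin_product_topology_alt
proof
  fix x assume x: "x \<in> sbox t"
  define U where "U = (\<lambda>i::nat. if i \<in> t then {True} else (UNIV::bool set))"
  have "{i \<in> UNIV. U i \<noteq> topspace sierpinski_space} \<subseteq> t" by (auto simp: U_def)
  then have "finite {i \<in> UNIV. U i \<noteq> topspace sierpinski_space}" using assms finite_subset by blast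
  moreover have "\<forall>i\<in>UNIV. openin sierpinski_space (U i)" by (simp add: U_def openin_sier)
  moreover have "x \<in> Pi\<^sub>E UNIV U" using x by (auto simp: U_def sbox_def)
  moreover have "Pi\<^sub>E UNIV U \<subseteq> sbox t" by (auto simp: U_def sbox_def PiE_def Pi_def)
  ultimately show "\<exists>U. finite {i \<in> UNIV. U i \<noteq> topspace sierpinski_space} \<and>
       (\<forall>i\<in>UNIV. openin sierpinski_space (U i)) \<and> x \<in> Pi\<^sub>E UNIV U \<and> Pi\<^sub>E UNIV U \<subseteq> sbox t"
    by blast
qed

lemma SP_basis: assumes "openin sierpinski_power Q" "a \<in> Q"
  shows "\<exists>t. finite t \<and> a \<in> sbox t \<and> sbox t \<subseteq> Q"
proof -
  obtain U where U: "finite {i \<in> UNIV. U i \<noteq> topspace sierpinski_space}"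
     "\<forall>i\<in>UNIV. openin sierpinski_space (U i)" "a \<in> Pi\<^sub>E UNIV U" "Pi\<^sub>E UNIV U \<subseteq> Q"
    using assms unfolding sierpinski_power_def openin_product_topology_alt by blast
  define t where "t = {i \<in> UNIV. U i \<noteq> topspace sierpinski_space}"
  have "finite t" using U(1) t_def by simp
  moreover have "a \<in> sbox t"
  proof -
    { fix i assume "i \<in> t"
      then have "U i \<noteq> UNIV" "a i \<in> U i" using U(3) t_def by auto
      then have "U i = {True}" using U(2) openin_sier by blast
      then have "a i" using \<open>a i \<in> U i\<close> by simp
    } then show ?thesis by (simp add: sbox_def)
  qed
  moreover have "sbox t \<subseteq> Q"
  proof
    fix b assume b: "b \<in> sbox t"
    have "b \<in> Pi\<^sub>E UNIV U"
    proof -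
      { fix i
        have "b i \<in> U i"
        proof (cases "i \<in> t")
          case True
          then have "U i \<noteq> UNIV" "a i \<in> U i" "b i" using U(3) t_def b sbox_def by auto
          then have "U i = {True}" using U(2) openin_sier by blast
          then show ?thesis using \<open>b i\<close> by simp
        next
          case False then show ?thesis using t_def by auto
        qed }
      then show ?thesis by auto
    qed
    then show "b \<in> Q" using U(4) by blast
  qed
  ultimately show ?thesis by blast
qed


abbreviation CS :: "(nat \<Rightarrow> bool) topology" where
  "CS \<equiv> product_topology (\<lambda>_. discrete_topology (UNIV::bool set)) UNIV"

lemma topspace_CS[simp]: "topspace CS = UNIV"
  by (simp add: topspace_product_topology)

lemma CS_open_coord: "openin CS {z. z n \<in> B}"
proof -
  have "continuous_map CS (discrete_topology UNIV) (\<lambda>x. x n)"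
    by (rule continuous_map_product_projection) simp
  from openin_continuous_map_preimage[OF this, of B] show ?thesis by simp
qed

lemma CS_cm: "completely_metrizable_space CS"
  by (simp add: completely_metrizable_space_product_topology completely_metrizable_space_discrete_topology)

lemma CS_sc: "second_countable CS"
  unfolding second_countable_def
proof (intro exI conjI ballI allI impI)
  define cyl where "cyl = (\<lambda>(p,q). {z::nat\<Rightarrow>bool. (\<forall>i\<in>set_decode p. z i) \<and> (\<forall>i\<in>set_decode q. \<not> z i)})"
  show "countable (range cyl)" by simp
  show "openin CS V" if "V \<in> range cyl" for V
  proof -
    obtain p q where V: "V = {z::nat\<Rightarrow>bool. (\<forall>i\<in>set_decode p. z i) \<and> (\<forall>i\<in>set_decode q. \<not> z i)}"
      using \<open>V \<in> range cyl\<close> cyl_def by auto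
    define U where "U = (\<lambda>i::nat. (if i \<in> set_decode p then {True} else UNIV) \<inter> (if i \<in> set_decode q then {False} else (UNIV::bool set)))"
    have "V = Pi\<^sub>E UNIV U" unfolding V U_def by (auto simp: PiE_def Pi_def)
    moreover have "finite {i \<in> UNIV. U i \<noteq> topspace (discrete_topology UNIV)}"
      by (rule finite_subset[of _ "set_decode p \<union> set_decode q"]) (auto simp: U_def finite_set_decode)
    ultimately show ?thesis unfolding openin_product_topology_alt by auto
  qed
  show "\<exists>V\<in>range cyl. x \<in> V \<and> V \<subseteq> U" if "openin CS U \<and> x \<in> U" for U x
  proof -
    have H: "openin CS U" "x \<in> U" using that by auto
    have "\<exists>W. finite {i \<in> UNIV. W i \<noteq> topspace (discrete_topology (UNIV::bool set))} \<and>
        (\<forall>i\<in>UNIV. openin (discrete_topology UNIV) (W i)) \<and> x \<in> Pi\<^sub>E UNIV W \<and> Pi\<^sub>E UNIV W \<subseteq> U"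
      using H openin_product_topology_alt[of "\<lambda>_. discrete_topology (UNIV::bool set)" UNIV U] by blast
    then obtain W where W: "finite {i \<in> UNIV. W i \<noteq> topspace (discrete_topology (UNIV::bool set))}"
       "x \<in> Pi\<^sub>E UNIV W" "Pi\<^sub>E UNIV W \<subseteq> U" by blast
    define J where "J = {i \<in> UNIV. W i \<noteq> topspace (discrete_topology (UNIV::bool set))}"
    define p where "p = set_encode {i\<in>J. x i}"
    define q where "q = set_encode {i\<in>J. \<not> x i}"
    have fin: "finite {i\<in>J. x i}" "finite {i\<in>J. \<not> x i}" using W(1) J_def by auto
    have cp: "cyl (p,q) = {z. (\<forall>i\<in>{i\<in>J. x i}. z i) \<and> (\<forall>i\<in>{i\<in>J. \<not> x i}. \<not> z i)}"
      unfolding cyl_def p_def q_def using fin by simp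
    have "x \<in> cyl (p,q)" using cp by auto
    moreover have "cyl (p,q) \<subseteq> U"
    proof
      fix z assume z: "z \<in> cyl (p,q)"
      have "z \<in> Pi\<^sub>E UNIV W"
      proof -
        { fix i
          have "z i \<in> W i"
          proof (cases "i \<in> J")
            case True
            then have "z i = x i" using z cp by auto
            then show ?thesis using W(2) by auto
          next
            case False then show ?thesis using J_def by auto
          qed }
        then show ?thesis by auto
      qed
      then show "z \<in> U" using W(3) by blast
    qed
    ultimately show ?thesis by blast
  qed
qed

definition qopen where "qopen T R U \<longleftrightarrow> U \<subseteq> topspace T // R \<and> openin T {x \<in> topspace T. R `` {x} \<in> U}"

lemma istop_q: "istopology (qopen T R)"
  unfolding istopology_def qopen_def
proof (rule conjI; intro allI impI)
  fix S V assume a: "S \<subseteq> topspace T // R \<and> openin T {x \<in> topspace T. R `` {x} \<in> S}"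
     "V \<subseteq> topspace T // R \<and> openin T {x \<in> topspace T. R `` {x} \<in> V}"
  have "{x \<in> topspace T. R `` {x} \<in> S \<inter> V} = {x \<in> topspace T. R `` {x} \<in> S} \<inter> {x \<in> topspace T. R `` {x} \<in> V}" by auto
  then show "S \<inter> V \<subseteq> topspace T // R \<and> openin T {x \<in> topspace T. R `` {x} \<in> S \<inter> V}" using a by auto
next
  fix K assume K: "\<forall>S\<in>K. S \<subseteq> topspace T // R \<and> openin T {x \<in> topspace T. R `` {x} \<in> S}"
  have "{x \<in> topspace T. R `` {x} \<in> \<Union>K} = (\<Union>S\<in>K. {x \<in> topspace T. R `` {x} \<in> S})" by auto
  then show "\<Union>K \<subseteq> topspace T // R \<and> openin T {x \<in> topspace T. R `` {x} \<in> \<Union>K}" using K by auto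
qed

lemma openin_quot: "openin (quotient_topology T R) U \<longleftrightarrow>
   U \<subseteq> topspace T // R \<and> openin T {x \<in> topspace T. R `` {x} \<in> U}"
  using topology_inverse'[OF istop_q[of T R]] unfolding quotient_topology_def qopen_def[abs_def] by simp

lemma topspace_quot: "topspace (quotient_topology T R) = topspace T // R"
proof -
  have "openin (quotient_topology T R) (topspace T // R)"
  proof -
    have "{x \<in> topspace T. R `` {x} \<in> topspace T // R} = topspace T" by (auto intro: quotientI)
    then show ?thesis unfolding openin_quot by simp
  qed
  then have "topspace T // R \<subseteq> topspace (quotient_topology T R)" by (rule openin_subset)
  moreover have "topspace (quotient_topology T R) \<subseteq> topspace T // R"
    using openin_topspace[of "quotient_topology T R"] openin_quot by blast
  ultimately show ?thesis by blast
qed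

lemma closure_equiv_iff:
  assumes "equiv (topspace T) E"
  shows "(x,y) \<in> closure_equiv T E \<longleftrightarrow> x \<in> topspace T \<and> y \<in> topspace T \<and>
     (\<forall>V. openin T V \<longrightarrow> (x \<in> E `` V \<longleftrightarrow> y \<in> E `` V))"
proof -
  have sym: "(a,b) \<in> E \<longleftrightarrow> (b,a) \<in> E" for a b using assms by (meson equiv_def symD)
  have key: "(\<exists>z. z \<in> E `` {a} \<and> z \<in> V) \<longleftrightarrow> a \<in> E `` V" for a V using sym by auto
  have "T closure_of (E `` {x}) = T closure_of (E `` {y}) \<longleftrightarrow>
        (\<forall>V. openin T V \<longrightarrow> ((\<exists>z. z \<in> E `` {x} \<and> z \<in> V) \<longleftrightarrow> (\<exists>z. z \<in> E `` {y} \<and> z \<in> V)))"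
  proof
    assume eq: "T closure_of (E `` {x}) = T closure_of (E `` {y})"
    show "\<forall>V. openin T V \<longrightarrow> ((\<exists>z. z \<in> E `` {x} \<and> z \<in> V) \<longleftrightarrow> (\<exists>z. z \<in> E `` {y} \<and> z \<in> V))"
    proof (intro allI impI)
      fix V assume V: "openin T V"
      have "(\<exists>z. z \<in> E `` {a} \<and> z \<in> V) \<longleftrightarrow> (\<exists>z. z \<in> T closure_of (E `` {a}) \<and> z \<in> V)" for a
      proof
        assume "\<exists>z. z \<in> E `` {a} \<and> z \<in> V"
        then obtain z where z: "z \<in> E `` {a}" "z \<in> V" by blast
        then have "z \<in> topspace T" using V openin_subset by blast
        then show "\<exists>z. z \<in> T closure_of (E `` {a}) \<and> z \<in> V" using z
          by (metis closure_of_subset_Int IntI subsetD)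
      next
        assume "\<exists>z. z \<in> T closure_of (E `` {a}) \<and> z \<in> V"
        then show "\<exists>z. z \<in> E `` {a} \<and> z \<in> V" using V in_closure_of by metis
      qed
      then show "(\<exists>z. z \<in> E `` {x} \<and> z \<in> V) \<longleftrightarrow> (\<exists>z. z \<in> E `` {y} \<and> z \<in> V)" using eq by simp
    qed
  next
    assume H: "\<forall>V. openin T V \<longrightarrow> ((\<exists>z. z \<in> E `` {x} \<and> z \<in> V) \<longleftrightarrow> (\<exists>z. z \<in> E `` {y} \<and> z \<in> V))"
    show "T closure_of (E `` {x}) = T closure_of (E `` {y})"
      unfolding set_eq_iff in_closure_of using H by metis
  qed
  then show ?thesis unfolding closure_equiv_def using key by auto
qed



locale qp_setup =
  fixes X :: "'a topology" and E :: "'a rel" and h :: "'a \<Rightarrow> nat \<Rightarrow> bool" and h' :: "(nat \<Rightarrow> bool) \<Rightarrow> 'a"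
    and A :: "(nat \<Rightarrow> bool) set" and Uk Fk :: "nat \<Rightarrow> (nat \<Rightarrow> bool) set"
  assumes eqv: "equiv (topspace X) E"
    and sat: "\<And>U. openin X U \<Longrightarrow> openin X (E `` U)"
    and hm: "homeomorphic_maps X (subtopology sierpinski_power A) h h'"
    and Uo: "\<And>n. openin sierpinski_power (Uk n)"
    and Fc: "\<And>n. closedin sierpinski_power (Fk n)"
    and Aeq: "A = (\<Inter>n. Uk n \<union> Fk n)"
begin

lemma h_cont: "continuous_map X sierpinski_power h"
  using hm continuous_map_into_fulltopology unfolding homeomorphic_maps_def by blast

lemma h_A: "x \<in> topspace X \<Longrightarrow> h x \<in> A"
  using hm unfolding homeomorphic_maps_def continuous_map_def by auto

lemma h'_in: "a \<in> A \<Longrightarrow> h' a \<in> topspace X"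
  using hm unfolding homeomorphic_maps_def continuous_map_def by auto

lemma inv1: "x \<in> topspace X \<Longrightarrow> h' (h x) = x"
  using hm unfolding homeomorphic_maps_def by auto

lemma inv2: "a \<in> A \<Longrightarrow> h (h' a) = a"
  using hm unfolding homeomorphic_maps_def by auto

lemma h'_cont: "continuous_map (subtopology sierpinski_power A) X h'"
  using hm unfolding homeomorphic_maps_def by auto

lemma E_sub: "(x,y) \<in> E \<Longrightarrow> x \<in> topspace X \<and> y \<in> topspace X"
  using eqv unfolding equiv_def refl_on_def by auto

lemma E_refl: "x \<in> topspace X \<Longrightarrow> (x,x) \<in> E"
  using eqv unfolding equiv_def refl_on_def by auto

lemma E_sym: "(x,y) \<in> E \<Longrightarrow> (y,x) \<in> E"
  using eqv unfolding equiv_def by (meson symD)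

lemma E_trans: "(x,y) \<in> E \<Longrightarrow> (y,z) \<in> E \<Longrightarrow> (x,z) \<in> E"
  using eqv unfolding equiv_def by (meson transD)

definition Bs where "Bs t = {x \<in> topspace X. h x \<in> sbox t}"
definition B where "B n = Bs (set_decode n)"
definition W where "W n = E `` B n"
definition g where "g x = (\<lambda>n. x \<in> W n)"

lemma Bs_open: "finite t \<Longrightarrow> openin X (Bs t)"
  unfolding Bs_def using openin_continuous_map_preimage[OF h_cont sbox_open] by simp

lemma B_open: "openin X (B n)"
  unfolding B_def by (simp add: Bs_open finite_set_decode)

lemma Bs_Un: "Bs (s \<union> t) = Bs s \<inter> Bs t"
  unfolding Bs_def sbox_def by auto

lemma Bs_mono: "s \<subseteq> t \<Longrightarrow> Bs t \<subseteq> Bs s"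
  unfolding Bs_def sbox_def by auto

lemma B_enc: "finite t \<Longrightarrow> B (set_encode t) = Bs t"
  unfolding B_def by simp

lemma basis: assumes "openin X U" "x \<in> U" shows "\<exists>t. finite t \<and> x \<in> Bs t \<and> Bs t \<subseteq> U"
proof -
  have xt: "x \<in> topspace X" using assms openin_subset by blast
  have "openin (subtopology sierpinski_power A) {a \<in> topspace (subtopology sierpinski_power A). h' a \<in> U}"
    using openin_continuous_map_preimage[OF h'_cont assms(1)] .
  then obtain Q where Q: "openin sierpinski_power Q" "{a \<in> topspace (subtopology sierpinski_power A). h' a \<in> U} = Q \<inter> A"
    unfolding openin_subtopology by blast
  have Q2: "{a \<in> A. h' a \<in> U} = Q \<inter> A" using Q(2) by simp
  have "h x \<in> {a \<in> A. h' a \<in> U}" using h_A[OF xt] inv1[OF xt] assms(2) by simp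
  then have hx: "h x \<in> Q" using Q2 by blast
  obtain t where t: "finite t" "h x \<in> sbox t" "sbox t \<subseteq> Q" using SP_basis[OF Q(1) hx] by blast
  have "Bs t \<subseteq> U"
  proof
    fix y assume y: "y \<in> Bs t"
    then have yt: "y \<in> topspace X" and "h y \<in> Q" using t unfolding Bs_def by auto
    then have "h y \<in> Q \<inter> A" using h_A by blast
    then have "h y \<in> {a \<in> A. h' a \<in> U}" using Q2 by blast
    then have "h' (h y) \<in> U" by blast
    then show "y \<in> U" using inv1[OF yt] by simp
  qed
  then show ?thesis using t xt unfolding Bs_def by auto
qed

lemma W_open: "openin X (W n)"
  unfolding W_def by (rule sat[OF B_open])

lemma W_sub: "W n \<subseteq> topspace X"
  unfolding W_def using E_sub by auto

lemma W_inv: "(y,x) \<in> E \<Longrightarrow> y \<in> W n \<longleftrightarrow> x \<in> W n"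
  unfolding W_def using E_sym E_trans by blast

lemma g_E: "(x,y) \<in> E \<Longrightarrow> g x = g y"
  unfolding g_def using W_inv by auto

lemma B_W: "x \<in> B n \<Longrightarrow> x \<in> W n"
  unfolding W_def B_def Bs_def using E_refl by auto

lemma B0: "B 0 = topspace X"
  unfolding B_def Bs_def sbox_def by simp

lemma Esat_basis: assumes "openin X U" "x \<in> E `` U" shows "\<exists>n. x \<in> W n \<and> W n \<subseteq> E `` U"
proof -
  obtain u where u: "u \<in> U" "(u,x) \<in> E" using assms(2) by auto
  obtain t where t: "finite t" "u \<in> Bs t" "Bs t \<subseteq> U" using basis[OF assms(1) u(1)] by blast
  have "x \<in> W (set_encode t)" unfolding W_def B_enc[OF t(1)] using t u by auto
  moreover have "W (set_encode t) \<subseteq> E `` U" unfolding W_def B_enc[OF t(1)] using t by auto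
  ultimately show ?thesis by blast
qed

lemma fibreX: "(x,y) \<in> closure_equiv X E \<longleftrightarrow> x \<in> topspace X \<and> y \<in> topspace X \<and> g x = g y"
proof -
  have "(\<forall>V. openin X V \<longrightarrow> (x \<in> E `` V \<longleftrightarrow> y \<in> E `` V)) \<longleftrightarrow> g x = g y"
  proof
    assume H: "\<forall>V. openin X V \<longrightarrow> (x \<in> E `` V \<longleftrightarrow> y \<in> E `` V)"
    show "g x = g y" unfolding g_def W_def using H B_open by auto
  next
    assume G: "g x = g y"
    have *: "a \<in> E `` V \<Longrightarrow> g a = g b \<Longrightarrow> openin X V \<Longrightarrow> b \<in> E `` V" for a b V
    proof -
      assume "a \<in> E `` V" "g a = g b" "openin X V"
      then obtain n where "a \<in> W n" "W n \<subseteq> E `` V" using Esat_basis by blast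
      moreover have "b \<in> W n" using \<open>a \<in> W n\<close> \<open>g a = g b\<close> unfolding g_def by meson
      ultimately show ?thesis by blast
    qed
    show "\<forall>V. openin X V \<longrightarrow> (x \<in> E `` V \<longleftrightarrow> y \<in> E `` V)"
    proof (intro allI impI)
      fix V assume V: "openin X V"
      show "x \<in> E `` V \<longleftrightarrow> y \<in> E `` V" using *[of x V y, OF _ G V] *[of y V x, OF _ G[symmetric] V] by blast
    qed
  qed
  then show ?thesis using closure_equiv_iff[OF eqv] by auto
qed

definition C where "C = range (\<lambda>n. topspace X - W n)"
abbreviation T' where "T' \<equiv> topology_generated_by ({U. openin X U} \<union> C)"

lemma top_T': "topspace T' = topspace X"
proof -
  have "\<Union>({U. openin X U} \<union> C) = topspace X"
    unfolding C_def using openin_subset openin_topspace by blast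
  then show ?thesis by simp
qed

lemma X_open_T': "openin X U \<Longrightarrow> openin T' U"
  by (rule topology_generated_by_Basis) simp

lemma C_open_T': "openin T' (topspace X - W n)"
  by (rule topology_generated_by_Basis) (simp add: C_def)

lemma claim1:
  assumes "openin T' V" "x \<in> V"
  shows "\<exists>U Q. openin X U \<and> openin CS Q \<and> x \<in> U \<and> g x \<in> Q \<and> {y \<in> U. g y \<in> Q} \<subseteq> V"
proof -
  have gen: "generate_topology_on ({U. openin X U} \<union> C) V"
    using assms(1) openin_topology_generated_by_iff by blast
  have "\<forall>x\<in>V'. \<exists>U Q. openin X U \<and> openin CS Q \<and> x \<in> U \<and> g x \<in> Q \<and> {y \<in> U. g y \<in> Q} \<subseteq> V'"
    if "generate_topology_on ({U. openin X U} \<union> C) V'" for V'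
    using that
  proof (induction rule: generate_topology_on.induct)
    case Empty then show ?case by (simp only: empty_iff ball_simps)
  next
    case (Int a b)
    show ?case
    proof
      fix x assume "x \<in> a \<inter> b"
      obtain U1 Q1 where 1: "openin X U1" "openin CS Q1" "x \<in> U1" "g x \<in> Q1" "{y \<in> U1. g y \<in> Q1} \<subseteq> a"
        using Int.IH(1) \<open>x \<in> a \<inter> b\<close> by blast
      obtain U2 Q2 where 2: "openin X U2" "openin CS Q2" "x \<in> U2" "g x \<in> Q2" "{y \<in> U2. g y \<in> Q2} \<subseteq> b"
        using Int.IH(2) \<open>x \<in> a \<inter> b\<close> by blast
      have "openin X (U1 \<inter> U2)" using 1 2 by blast
      moreover have "openin CS (Q1 \<inter> Q2)" using 1 2 by blast
      moreover have "{y \<in> U1 \<inter> U2. g y \<in> Q1 \<inter> Q2} \<subseteq> a \<inter> b" using 1(5) 2(5) by blast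
      ultimately show "\<exists>U Q. openin X U \<and> openin CS Q \<and> x \<in> U \<and> g x \<in> Q \<and> {y \<in> U. g y \<in> Q} \<subseteq> a \<inter> b"
        using 1 2 by blast
    qed
  next
    case (UN K)
    show ?case
    proof
      fix x assume "x \<in> \<Union>K"
      then obtain k where k: "k \<in> K" "x \<in> k" by blast
      have "\<forall>x\<in>k. \<exists>U Q. openin X U \<and> openin CS Q \<and> x \<in> U \<and> g x \<in> Q \<and> {y \<in> U. g y \<in> Q} \<subseteq> k"
        using UN.IH k(1) by simp
      then obtain U Q where "openin X U" "openin CS Q" "x \<in> U" "g x \<in> Q" "{y \<in> U. g y \<in> Q} \<subseteq> k"
        using k(2) by blast
      then show "\<exists>U Q. openin X U \<and> openin CS Q \<and> x \<in> U \<and> g x \<in> Q \<and> {y \<in> U. g y \<in> Q} \<subseteq> \<Union>K"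
        using k by blast
    qed
  next
    case (Basis s)
    have oU: "openin CS UNIV" using openin_topspace[of CS] by simp
    show ?case
    proof
      fix x assume xs: "x \<in> s"
      from Basis consider "openin X s" | n where "s = topspace X - W n" unfolding C_def by blast
      then show "\<exists>U Q. openin X U \<and> openin CS Q \<and> x \<in> U \<and> g x \<in> Q \<and> {y \<in> U. g y \<in> Q} \<subseteq> s"
      proof cases
        case 1
        have "{y \<in> s. g y \<in> UNIV} \<subseteq> s" by blast
        then show ?thesis using xs 1 oU by blast
      next
        case 2
        have o: "openin CS {z. z n \<in> {False}}" by (rule CS_open_coord)
        have xt: "x \<in> topspace X" "g x \<in> {z. z n \<in> {False}}" using xs 2 unfolding g_def by auto
        have "{y \<in> topspace X. g y \<in> {z. z n \<in> {False}}} \<subseteq> s" using 2 unfolding g_def by auto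
        then show ?thesis using o xt openin_topspace[of X] by blast
      qed
    qed
  qed
  then show ?thesis using gen assms(2) by blast
qed

lemma claim2:
  assumes "openin T' V" "x \<in> V"
  shows "\<exists>Q. openin CS Q \<and> g x \<in> Q \<and> {y \<in> topspace X. g y \<in> Q} \<subseteq> E `` V"
proof -
  obtain U Q where UQ: "openin X U" "openin CS Q" "x \<in> U" "g x \<in> Q" "{y \<in> U. g y \<in> Q} \<subseteq> V"
    using claim1[OF assms] by blast
  obtain t where t: "finite t" "x \<in> Bs t" "Bs t \<subseteq> U" using basis[OF UQ(1,3)] by blast
  define n where "n = set_encode t"
  have Bn: "B n = Bs t" unfolding n_def using B_enc[OF t(1)] .
  define Q' where "Q' = Q \<inter> {z. z n \<in> {True}}"
  have "openin CS Q'" unfolding Q'_def using UQ(2) CS_open_coord by blast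
  moreover have "g x \<in> Q'" unfolding Q'_def using UQ(4) B_W[of x n] Bn t(2) unfolding g_def by auto
  moreover have "{y \<in> topspace X. g y \<in> Q'} \<subseteq> E `` V"
  proof clarify
    fix y assume y: "y \<in> topspace X" "g y \<in> Q'"
    then have "y \<in> W n" unfolding Q'_def g_def by auto
    then obtain b where b: "b \<in> B n" "(b,y) \<in> E" unfolding W_def by auto
    then have "g b = g y" using g_E by blast
    then have "b \<in> V" using b Bn t(3) UQ(5) y(2) unfolding Q'_def by auto
    then show "y \<in> E `` V" using b by auto
  qed
  ultimately show ?thesis by blast
qed

lemma eqv_T': "equiv (topspace T') E"
  using eqv top_T' by simp

lemma fibreT': "(x,y) \<in> closure_equiv T' E \<longleftrightarrow> x \<in> topspace X \<and> y \<in> topspace X \<and> g x = g y"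
proof -
  have "(\<forall>V. openin T' V \<longrightarrow> (x \<in> E `` V \<longleftrightarrow> y \<in> E `` V)) \<longleftrightarrow> g x = g y" if xy: "x \<in> topspace X" "y \<in> topspace X"
  proof
    assume H: "\<forall>V. openin T' V \<longrightarrow> (x \<in> E `` V \<longleftrightarrow> y \<in> E `` V)"
    show "g x = g y" unfolding g_def W_def using H B_open X_open_T' by auto
  next
    assume G: "g x = g y"
    have *: "a \<in> E `` V \<Longrightarrow> g a = g b \<Longrightarrow> b \<in> topspace X \<Longrightarrow> openin T' V \<Longrightarrow> b \<in> E `` V" for a b V
    proof -
      assume a: "a \<in> E `` V" "g a = g b" "b \<in> topspace X" "openin T' V"
      then obtain v where v: "v \<in> V" "(v,a) \<in> E" by auto
      obtain Q where "openin CS Q" "g v \<in> Q" "{y \<in> topspace X. g y \<in> Q} \<subseteq> E `` V"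
        using claim2[OF a(4) v(1)] by blast
      moreover have "g v = g b" using g_E[OF v(2)] a(2) by simp
      ultimately show ?thesis using a(3) by auto
    qed
    show "\<forall>V. openin T' V \<longrightarrow> (x \<in> E `` V \<longleftrightarrow> y \<in> E `` V)"
    proof (intro allI impI)
      fix V assume V: "openin T' V"
      show "x \<in> E `` V \<longleftrightarrow> y \<in> E `` V" using *[of x V y, OF _ G xy(2) V] *[of y V x, OF _ G[symmetric] xy(1) V] by blast
    qed
  qed
  moreover have "(x,y) \<in> closure_equiv T' E \<longleftrightarrow> x \<in> topspace X \<and> y \<in> topspace X \<and>
     (\<forall>V. openin T' V \<longrightarrow> (x \<in> E `` V \<longleftrightarrow> y \<in> E `` V))"
    using closure_equiv_iff[OF eqv_T', of x y] unfolding top_T' .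
  ultimately show ?thesis by blast
qed

lemma same_equiv: "closure_equiv T' E = closure_equiv X E"
  using fibreT' fibreX by auto

lemma C_props: "countable C" "\<forall>F\<in>C. closedin X F \<and> E `` F = F"
proof -
  show "countable C" unfolding C_def by simp
  show "\<forall>F\<in>C. closedin X F \<and> E `` F = F"
  proof
    fix F assume "F \<in> C"
    then obtain n where F: "F = topspace X - W n" unfolding C_def by auto
    have "closedin X F" unfolding F using W_open W_sub
      by (simp add: closedin_def Diff_Diff_Int inf.absorb2)
    moreover have "E `` F = F"
    proof
      show "E `` F \<subseteq> F" unfolding F using W_inv E_sub by blast
      show "F \<subseteq> E `` F" unfolding F using E_refl by blast
    qed
    ultimately show "closedin X F \<and> E `` F = F" by blast
  qed
qed

end


context qp_setup begin

definition Kd where "Kd n k \<longleftrightarrow> sbox (set_decode n) \<inter> Fk k = {}"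
definition good where "good n m k n' \<longleftrightarrow> set_decode n \<subseteq> set_decode n' \<and> B n' \<subseteq> W m \<and>
   (Kd n k \<longrightarrow> sbox (set_decode n') \<subseteq> Uk k)"
definition O1 where "O1 = {z::nat\<Rightarrow>bool. z 0}"
definition O2 where "O2 n m = {z::nat\<Rightarrow>bool. B n \<subseteq> W m \<longrightarrow> \<not> z n \<or> z m}"
definition O3 where "O3 n m k = {z::nat\<Rightarrow>bool. \<not> z n \<or> \<not> z m \<or> (\<exists>n'. good n m k n' \<and> z n')}"
definition Gs where "Gs = O1 \<inter> (\<Inter>n m. O2 n m) \<inter> (\<Inter>n m k. O3 n m k)"

lemma O1_open: "openin CS O1"
  unfolding O1_def using CS_open_coord[of 0 "{True}"] by simp

lemma O2_open: "openin CS (O2 n m)"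
proof (cases "B n \<subseteq> W m")
  case True
  then have "O2 n m = {z. z n \<in> {False}} \<union> {z. z m \<in> {True}}" unfolding O2_def by auto
  then show ?thesis using CS_open_coord by (metis openin_Un)
next
  case False
  then have "O2 n m = topspace CS" unfolding O2_def by auto
  then show ?thesis by (metis openin_topspace)
qed

lemma O3_open: "openin CS (O3 n m k)"
proof -
  have "O3 n m k = {z. z n \<in> {False}} \<union> {z. z m \<in> {False}} \<union> (\<Union>n'\<in>{n'. good n m k n'}. {z. z n' \<in> {True}})"
    unfolding O3_def by auto
  moreover have "openin CS (\<Union>n'\<in>{n'. good n m k n'}. {z. z n' \<in> {True}})"
    using CS_open_coord by blast
  ultimately show ?thesis using CS_open_coord by (metis openin_Un)
qed

lemma true_points: assumes x: "x \<in> topspace X" shows "g x \<in> Gs"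
proof -
  have "g x \<in> O1" unfolding O1_def g_def using B_W[of x 0] B0 x by simp
  moreover have "g x \<in> O2 n m" for n m
  proof -
    { assume sub: "B n \<subseteq> W m" and xn: "x \<in> W n"
      then obtain b where b: "b \<in> B n" "(b,x) \<in> E" unfolding W_def by auto
      then have "b \<in> W m" using sub by blast
      then have "x \<in> W m" using W_inv[OF b(2)] by blast }
    then show ?thesis unfolding O2_def g_def by blast
  qed
  moreover have "g x \<in> O3 n m k" for n m k
  proof -
    { assume xn: "x \<in> W n" and xm: "x \<in> W m"
      obtain b1 where b1: "b1 \<in> B n" "(b1,x) \<in> E" using xn unfolding W_def by auto
      obtain b2 where b2: "b2 \<in> B m" "(b2,x) \<in> E" using xm unfolding W_def by auto
      have "(b2,b1) \<in> E" using b1(2) b2(2) E_sym E_trans by blast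
      then have b1m: "b1 \<in> W m" using b2(1) unfolding W_def by auto
      have b1t: "b1 \<in> topspace X" "h b1 \<in> sbox (set_decode n)" using b1(1) unfolding B_def Bs_def by auto
      obtain t1 where t1: "finite t1" "h b1 \<in> sbox t1" "Kd n k \<longrightarrow> sbox t1 \<subseteq> Uk k"
      proof (cases "Kd n k")
        case True
        have "h b1 \<in> A" using h_A b1t by blast
        then have "h b1 \<in> Uk k \<union> Fk k" using Aeq by blast
        moreover have "h b1 \<notin> Fk k" using True b1t(2) unfolding Kd_def by blast
        ultimately have "h b1 \<in> Uk k" by blast
        then obtain t where "finite t" "h b1 \<in> sbox t" "sbox t \<subseteq> Uk k" using SP_basis[OF Uo] by blast
        then show ?thesis using that by blast
      next
        case False
        then show ?thesis using that[of "{}"] by (simp add: sbox_def)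
      qed
      obtain t2 where t2: "finite t2" "b1 \<in> Bs t2" "Bs t2 \<subseteq> W m" using basis[OF W_open b1m] by blast
      define n' where "n' = set_encode (set_decode n \<union> t1 \<union> t2)"
      have fin: "finite (set_decode n \<union> t1 \<union> t2)" using t1(1) t2(1) finite_set_decode by blast
      have dn': "set_decode n' = set_decode n \<union> t1 \<union> t2" unfolding n'_def using fin by simp
      have Bn': "B n' = Bs (set_decode n) \<inter> Bs t1 \<inter> Bs t2" unfolding B_def dn' Bs_Un by simp
      have "b1 \<in> B n'" unfolding Bn' using b1(1) t1(2) t2(2) b1t unfolding B_def Bs_def by auto
      moreover have "B n' \<subseteq> W m" using Bn' t2(3) by blast
      moreover have "sbox (set_decode n') \<subseteq> sbox t1" unfolding dn' sbox_def by auto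
      ultimately have "good n m k n'" "x \<in> W n'" unfolding good_def W_def using dn' t1(3) b1(2) by auto
      then have "\<exists>n'. good n m k n' \<and> x \<in> W n'" by blast }
    then show ?thesis unfolding O3_def g_def by blast
  qed
  ultimately show ?thesis unfolding Gs_def by blast
qed

lemma construction: assumes z: "z \<in> Gs" shows "z \<in> g ` topspace X"
proof -
  have z0: "z 0" and z2: "\<And>n m. B n \<subseteq> W m \<Longrightarrow> z n \<Longrightarrow> z m"
    and z3: "\<And>n m k. z n \<Longrightarrow> z m \<Longrightarrow> \<exists>n'. good n m k n' \<and> z n'"
    using z unfolding Gs_def O1_def O2_def O3_def by blast+
  define kk where "kk j = fst (prod_decode j)" for j
  define mm where "mm j = (if z (snd (prod_decode j)) then snd (prod_decode j) else 0)" for j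
  have zmm: "z (mm j)" for j unfolding mm_def using z0 by auto
  define nxt where "nxt j n = (SOME n'. good n (mm j) (kk j) n' \<and> z n')" for j n
  define sq where "sq = rec_nat 0 nxt"
  have sq0: "sq 0 = 0" and sqS: "sq (Suc j) = nxt j (sq j)" for j unfolding sq_def by simp_all
  have zsq: "z (sq j)" for j
  proof (induction j)
    case 0 then show ?case using sq0 z0 by simp
  next
    case (Suc j)
    have "\<exists>n'. good (sq j) (mm j) (kk j) n' \<and> z n'" using z3[OF Suc zmm] .
    then have "good (sq j) (mm j) (kk j) (nxt j (sq j)) \<and> z (nxt j (sq j))"
      unfolding nxt_def by (rule someI_ex)
    then show ?case using sqS by simp
  qed
  have gd: "good (sq j) (mm j) (kk j) (sq (Suc j))" for j
  proof -
    have "\<exists>n'. good (sq j) (mm j) (kk j) n' \<and> z n'" using z3[OF zsq zmm] .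
    then have "good (sq j) (mm j) (kk j) (nxt j (sq j)) \<and> z (nxt j (sq j))"
      unfolding nxt_def by (rule someI_ex)
    then show ?thesis using sqS by simp
  qed
  define S where "S j = set_decode (sq j)" for j
  have Smono1: "S j \<le> S (Suc j)" for j using gd[of j] unfolding good_def S_def by blast
  have Smono: "j \<le> j' \<Longrightarrow> S j \<subseteq> S j'" for j j' using lift_Suc_mono_le[of S, OF Smono1] by blast
  define a where "a i = (\<exists>j. i \<in> S j)" for i
  have a_box: "a \<in> sbox (S j)" for j unfolding sbox_def a_def by blast
  have fin_in: "finite t \<Longrightarrow> t \<subseteq> {i. a i} \<Longrightarrow> \<exists>J. t \<subseteq> S J" for t
  proof (induction t rule: finite_induct)
    case empty then show ?case by simp
  next
    case (insert i t)
    then obtain J where J: "t \<subseteq> S J" by blast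
    obtain J' where J': "i \<in> S J'" using insert.prems unfolding a_def by blast
    have "t \<subseteq> S (max J J')" using J Smono[of J "max J J'"] by simp
    moreover have "i \<in> S (max J J')" using J' Smono[of J' "max J J'"] by auto
    ultimately show ?case by blast
  qed
  have aA: "a \<in> A"
  proof -
    have "a \<in> Uk k \<union> Fk k" for k
    proof (cases "a \<in> Fk k")
      case True then show ?thesis by blast
    next
      case False
      have "openin sierpinski_power (UNIV - Fk k)" using Fc[of k] unfolding closedin_def by simp
      then obtain t where t: "finite t" "a \<in> sbox t" "sbox t \<subseteq> UNIV - Fk k"
        using SP_basis False by blast
      have "t \<subseteq> {i. a i}" using t(2) unfolding sbox_def by blast
      then obtain J where J: "t \<subseteq> S J" using fin_in t(1) by blast
      define j where "j = prod_encode (k, J)"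
      have "J \<le> j" unfolding j_def by (rule le_prod_encode_2)
      then have "t \<subseteq> S j" using J Smono by blast
      then have "sbox (S j) \<subseteq> sbox t" unfolding sbox_def by blast
      then have "Kd (sq j) k" using t(3) unfolding Kd_def S_def by blast
      moreover have "kk j = k" unfolding kk_def j_def by simp
      ultimately have "sbox (S (Suc j)) \<subseteq> Uk k" using gd[of j] unfolding good_def S_def by simp
      then show ?thesis using a_box by blast
    qed
    then show ?thesis using Aeq by blast
  qed
  define x where "x = h' a"
  have xt: "x \<in> topspace X" and hx: "h x = a" unfolding x_def using h'_in[OF aA] inv2[OF aA] by auto
  have xB: "x \<in> B (sq j)" for j unfolding B_def Bs_def using xt hx a_box S_def by simp
  have "g x = z"
  proof
    fix m
    show "g x m = z m"
    proof
      assume "g x m"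
      then have xm: "x \<in> W m" unfolding g_def .
      obtain t where t: "finite t" "x \<in> Bs t" "Bs t \<subseteq> W m" using basis[OF W_open xm] by blast
      have "t \<subseteq> {i. a i}" using t(2) hx unfolding Bs_def sbox_def by auto
      then obtain J where J: "t \<subseteq> S J" using fin_in t(1) by blast
      have "B (sq J) \<subseteq> W m" using Bs_mono[OF J] t(3) unfolding B_def S_def by blast
      then show "z m" using z2 zsq by blast
    next
      assume zm: "z m"
      define j where "j = prod_encode (0, m)"
      have "mm j = m" unfolding mm_def j_def using zm by simp
      then have "B (sq (Suc j)) \<subseteq> W m" using gd[of j] unfolding good_def by simp
      then show "g x m" using xB unfolding g_def by blast
    qed
  qed
  then show ?thesis using xt by blast
qed

lemma G_eq: "g ` topspace X = Gs"
  using construction true_points by blast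

lemma G_gdelta: "gdelta_in CS (g ` topspace X)"
proof -
  define T where "T = insert O1 (range (\<lambda>(n,m). O2 n m) \<union> range (\<lambda>(n,m,k). O3 n m k))"
  have "countable T" unfolding T_def by simp
  moreover have "\<forall>U\<in>T. openin CS U" unfolding T_def using O1_open O2_open O3_open by auto
  moreover have "\<Inter>T = Gs" unfolding T_def Gs_def by auto
  ultimately have "(countable intersection_of openin CS) Gs"
    unfolding intersection_of_def by blast
  then show ?thesis unfolding gdelta_in_alt G_eq by simp
qed

end


context qp_setup begin

abbreviation R where "R \<equiv> closure_equiv T' E"

lemma R_class: "x \<in> topspace X \<Longrightarrow> R `` {x} = {y \<in> topspace X. g y = g x}"
  using fibreT' by auto

definition phi where "phi c = g (SOME x. x \<in> c)"
definition psi where "psi z = R `` {SOME x. x \<in> topspace X \<and> g x = z}"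

lemma phi_class: assumes "x \<in> topspace X" shows "phi (R `` {x}) = g x"
proof -
  have "x \<in> R `` {x}" using R_class assms by simp
  then have "(SOME y. y \<in> R `` {x}) \<in> R `` {x}" by (rule someI)
  then show ?thesis unfolding phi_def using R_class assms by simp
qed

lemma psi_g: assumes "x \<in> topspace X" shows "psi (g x) = R `` {x}"
proof -
  have "\<exists>y. y \<in> topspace X \<and> g y = g x" using assms by blast
  then have "(SOME y. y \<in> topspace X \<and> g y = g x) \<in> topspace X \<and> g (SOME y. y \<in> topspace X \<and> g y = g x) = g x"
    by (rule someI_ex)
  then show ?thesis unfolding psi_def using R_class assms by simp
qed

abbreviation Y where "Y \<equiv> closure_quotient T' E"

lemma top_Y: "topspace Y = topspace X // R"
  unfolding closure_quotient_def topspace_quot top_T' ..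

lemma openin_Y: "openin Y U \<longleftrightarrow> U \<subseteq> topspace X // R \<and> openin T' {x \<in> topspace X. R `` {x} \<in> U}"
  unfolding closure_quotient_def openin_quot top_T' ..

lemma g_cont: "continuous_map T' CS g"
  unfolding continuous_map_componentwise_UNIV
proof
  fix k
  show "continuous_map T' (discrete_topology UNIV) (\<lambda>x. g x k)"
    unfolding continuous_map_def
  proof (intro conjI allI impI)
    show "(\<lambda>x. g x k) \<in> topspace T' \<rightarrow> topspace (discrete_topology UNIV)" by simp
    fix U :: "bool set"
    have eq: "{x \<in> topspace T'. g x k \<in> U} = (if True \<in> U then W k else {}) \<union> (if False \<in> U then topspace X - W k else {})"
      unfolding top_T' g_def
    proof (rule set_eqI)
      fix x show "x \<in> {x \<in> topspace X. (x \<in> W k) \<in> U} \<longleftrightarrow>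
          x \<in> (if True \<in> U then W k else {}) \<union> (if False \<in> U then topspace X - W k else {})"
        by (cases "x \<in> W k") (use W_sub in auto)
    qed
    have "openin T' (W k)" using X_open_T' W_open by blast
    then show "openin T' {x \<in> topspace T'. g x k \<in> U}"
      unfolding eq using C_open_T' by (simp add: openin_Un)
  qed
qed

lemma homeo: "Y homeomorphic_space subtopology CS (g ` topspace X)"
  unfolding homeomorphic_space_def
proof (intro exI)
  let ?G = "g ` topspace X"
  have tsub: "topspace (subtopology CS ?G) = ?G" by simp
  show "homeomorphic_maps Y (subtopology CS ?G) phi psi"
    unfolding homeomorphic_maps_def
  proof (intro conjI ballI)
    show "continuous_map Y (subtopology CS ?G) phi"
      unfolding continuous_map_def
    proof (intro conjI allI impI)
      show "phi \<in> topspace Y \<rightarrow> topspace (subtopology CS ?G)"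
      proof
        fix c assume "c \<in> topspace Y"
        then obtain x where x: "x \<in> topspace X" "c = R `` {x}" unfolding top_Y by (auto elim: quotientE)
        then show "phi c \<in> topspace (subtopology CS ?G)" using phi_class tsub by simp
      qed
      fix U assume "openin (subtopology CS ?G) U"
      then obtain Q where Q: "openin CS Q" "U = Q \<inter> ?G" unfolding openin_subtopology by blast
      have sub: "{c \<in> topspace Y. phi c \<in> U} \<subseteq> topspace X // R" using top_Y by blast
      have "{x \<in> topspace X. R `` {x} \<in> {c \<in> topspace Y. phi c \<in> U}} = {x \<in> topspace T'. g x \<in> Q}"
        unfolding top_T' top_Y using phi_class Q(2) by (auto intro: quotientI)
      moreover have "openin T' {x \<in> topspace T'. g x \<in> Q}"
        using openin_continuous_map_preimage[OF g_cont Q(1)] .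
      ultimately show "openin Y {c \<in> topspace Y. phi c \<in> U}" unfolding openin_Y using sub by simp
    qed
    show "continuous_map (subtopology CS ?G) Y psi"
      unfolding continuous_map_def
    proof (intro conjI allI impI)
      show "psi \<in> topspace (subtopology CS ?G) \<rightarrow> topspace Y"
        unfolding tsub top_Y using psi_g by (auto intro: quotientI)
      fix U assume U: "openin Y U"
      define V where "V = {x \<in> topspace X. R `` {x} \<in> U}"
      have V: "openin T' V" using U unfolding openin_Y V_def by blast
      define Q where "Q = \<Union>{Q'. openin CS Q' \<and> {y \<in> topspace X. g y \<in> Q'} \<subseteq> E `` V}"
      have Qo: "openin CS Q" unfolding Q_def by blast
      have "{z \<in> topspace (subtopology CS ?G). psi z \<in> U} = Q \<inter> ?G"
      proof
        show "{z \<in> topspace (subtopology CS ?G). psi z \<in> U} \<subseteq> Q \<inter> ?G"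
        proof clarify
          fix z assume "z \<in> topspace (subtopology CS ?G)" "psi z \<in> U"
          then obtain x where x: "x \<in> topspace X" "z = g x" "psi z \<in> U" using tsub by auto
          then have "x \<in> V" unfolding V_def using psi_g by simp
          then obtain Q' where "openin CS Q'" "g x \<in> Q'" "{y \<in> topspace X. g y \<in> Q'} \<subseteq> E `` V"
            using claim2[OF V] by blast
          then show "z \<in> Q \<inter> ?G" unfolding Q_def using x by blast
        qed
        show "Q \<inter> ?G \<subseteq> {z \<in> topspace (subtopology CS ?G). psi z \<in> U}"
        proof clarify
          fix z y assume zQ: "g y \<in> Q" and y: "y \<in> topspace X"
          then obtain Q' where "openin CS Q'" "g y \<in> Q'" "{y \<in> topspace X. g y \<in> Q'} \<subseteq> E `` V"
            unfolding Q_def by blast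
          then have "y \<in> E `` V" using y by blast
          then obtain v where v: "v \<in> V" "(v,y) \<in> E" by blast
          have vt: "v \<in> topspace X" using v(1) unfolding V_def by blast
          have "psi (g y) = R `` {v}" using psi_g[OF y] R_class[OF y] R_class[OF vt] g_E[OF v(2)] by simp
          then have "psi (g y) \<in> U" using v(1) unfolding V_def by simp
          then show "g y \<in> topspace (subtopology CS ?G) \<and> psi (g y) \<in> U" using y tsub by blast
        qed
      qed
      then show "openin (subtopology CS ?G) {z \<in> topspace (subtopology CS ?G). psi z \<in> U}"
        unfolding openin_subtopology using Qo by blast
    qed
    fix c assume "c \<in> topspace Y"
    then obtain x where x: "x \<in> topspace X" "c = R `` {x}" unfolding top_Y by (auto elim: quotientE)
    then show "psi (phi c) = c" using phi_class psi_g by simp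
  next
    fix z assume "z \<in> topspace (subtopology CS ?G)"
    then obtain x where x: "x \<in> topspace X" "z = g x" using tsub by auto
    then show "phi (psi z) = z" using phi_class psi_g by simp
  qed
qed

lemma Polish_Y: "Polish_space Y"
proof -
  have "completely_metrizable_space (subtopology CS (g ` topspace X))"
    using completely_metrizable_space_gdelta_in[OF CS_cm G_gdelta] .
  moreover have "separable_space (subtopology CS (g ` topspace X))"
    using second_countable_imp_separable_space[OF second_countable_subtopology[OF CS_sc]] .
  ultimately show ?thesis unfolding Polish_space_def
    using homeomorphic_completely_metrizable_space[OF homeo] homeomorphic_separable_space[OF homeo] by blast
qed

lemma main_result:
  "\<exists>CC :: 'a set set. countable CC \<and> (\<forall>F\<in>CC. closedin X F \<and> E `` F = F) \<and>
           closure_equiv (topology_generated_by ({U. openin X U} \<union> CC)) E = closure_equiv X E \<and>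
           Polish_space (closure_quotient (topology_generated_by ({U. openin X U} \<union> CC)) E)"
  using C_props same_equiv Polish_Y by blast

end

theorem corollary2p4:
  fixes X :: "'a topology" and E :: "'a rel"
  assumes "quasi_Polish_space X"
    and "equiv (topspace X) E"
    and "\<forall>U. openin X U \<longrightarrow> openin X (E `` U)"
  shows "\<exists>C :: 'a set set. countable C \<and> (\<forall>F\<in>C. closedin X F \<and> E `` F = F) \<and>
           closure_equiv (topology_generated_by ({U. openin X U} \<union> C)) E = closure_equiv X E \<and>
           Polish_space (closure_quotient (topology_generated_by ({U. openin X U} \<union> C)) E)"
proof -
  obtain A where A: "Pi02_in sierpinski_power A" "X homeomorphic_space subtopology sierpinski_power A"
    using assms(1) unfolding quasi_Polish_space_def by blast
  obtain U F :: "nat \<Rightarrow> (nat \<Rightarrow> bool) set" where UF: "\<forall>n. openin sierpinski_power (U n) \<and> closedin sierpinski_power (F n)"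
     "A = topspace sierpinski_power \<inter> (\<Inter>n. U n \<union> F n)"
    using A(1) unfolding Pi02_in_def by blast
  obtain h h' where hh: "homeomorphic_maps X (subtopology sierpinski_power A) h h'"
    using A(2) unfolding homeomorphic_space_def by blast
  interpret qp_setup X E h h' A U F
  proof
    show "equiv (topspace X) E" by (rule assms(2))
    show "\<And>V. openin X V \<Longrightarrow> openin X (E `` V)" using assms(3) by blast
    show "homeomorphic_maps X (subtopology sierpinski_power A) h h'" by (rule hh)
    show "\<And>n. openin sierpinski_power (U n)" using UF(1) by blast
    show "\<And>n. closedin sierpinski_power (F n)" using UF(1) by blast
    show "A = (\<Inter>n. U n \<union> F n)" using UF(2) by simp
  qed
  show ?thesis using main_result .
qed


end
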